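(* Let $b\ge 2$ with $b\not\equiv 1\pmod 3$, and let $n\ge 2$. Then $$\mathrm{Ap}(T_{b'}(n),s'_0)=\Big\{\sum_{i=1}^{n+1} t_i s'_i : (t_1,\dots,t_{n+1})\in R_{b'}(n)\Big\}.$$
   Context: For integers $b\ge2$ with $b\not\equiv1\pmod3$, $n\ge0$, $i\ge0$ put $s'_i=(b+1)b^{n+i}+1$, and $T_{b'}(n)=\langle\{s'_i:i\in\mathbb{N}\}\rangle$ (submonoid of $(\mathbb{N},+)$ generated by them). For a numerical semigroup $S$ and $x\in S\setminus\{0\}$, $\mathrm{Ap}(S,x)=\{s\in S:s-x\notin S\}$. $R_{b'}(n)$ is the set of $(t_1,\dots,t_{n+1})\in\{0,1,\dots,b\}^{n+1}$ such that: (i) if $t_i=b$ then $t_j=0$ for all $1\le j<i$; (ii) $t_{n+1}\le b-1$; (iii) if $t_{n+1}=b-1$ then $t_n\le b-1$, and if $(t_n,t_{n+1})=(b-1,b-1)$ then $t_1\le 2$ and $t_i=0$ for all $i\notin\{1,n,n+1\}$. *)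

theory Defs
  imports Main
begin

definition sgen :: "nat \<Rightarrow> nat \<Rightarrow> nat \<Rightarrow> nat" where
  "sgen b n i = (b + 1) * b ^ (n + i) + 1"

inductive_set submonoid_gen :: "nat set \<Rightarrow> nat set" for A :: "nat set" where
  zero: "0 \<in> submonoid_gen A"
| add: "a \<in> A \<Longrightarrow> x \<in> submonoid_gen A \<Longrightarrow> a + x \<in> submonoid_gen A"

definition T_b' :: "nat \<Rightarrow> nat \<Rightarrow> nat set" where
  "T_b' b n = submonoid_gen (range (sgen b n))"

text \<open>Apery set Ap(S,x) = {s in S. s - x notin S} (integer subtraction).\<close>
definition Apery :: "nat set \<Rightarrow> nat \<Rightarrow> nat set" where
  "Apery S x = {s \<in> S. \<not> (s \<ge> x \<and> s - x \<in> S)}"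

text \<open>R_{b'}(n): tuples (t_1..t_{n+1}) represented as functions nat => nat,
  with t j = 0 for j outside {1..n+1}.\<close>
definition R_b' :: "nat \<Rightarrow> nat \<Rightarrow> (nat \<Rightarrow> nat) set" where
  "R_b' b n = {t. (\<forall>j. (j < 1 \<or> j > n + 1) \<longrightarrow> t j = 0)
     \<and> (\<forall>j\<in>{1..n+1}. t j \<le> b)
     \<and> (\<forall>i\<in>{1..n+1}. t i = b \<longrightarrow> (\<forall>j. 1 \<le> j \<and> j < i \<longrightarrow> t j = 0))
     \<and> t (n + 1) \<le> b - 1
     \<and> (t (n + 1) = b - 1 \<longrightarrow> t n \<le> b - 1)
     \<and> ((t n = b - 1 \<and> t (n + 1) = b - 1) \<longrightarrow>
          (t 1 \<le> 2 \<and> (\<forall>i\<in>{1..n+1}. i \<notin> {1, n, n + 1} \<longrightarrow> t i = 0)))}"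

end

theory Submission
  imports Defs
begin

definition Fw :: "nat \<Rightarrow> (nat \<Rightarrow> nat) \<Rightarrow> (nat \<Rightarrow> nat) \<Rightarrow> nat" where
  "Fw n w u = (\<Sum>i=0..n+1. u i * w i)"

lemma Fw_upd:
  assumes "p \<le> n+1"
  shows "Fw n w (u(p := a)) + u p * w p = Fw n w u + a * w p"
proof -
  have fin: "finite {0..n+1}" by simp
  have p: "p \<in> {0..n+1}" using assms by simp
  have "Fw n w (u(p := a)) = a * w p + (\<Sum>i\<in>{0..n+1}-{p}. (u(p:=a)) i * w i)"
    unfolding Fw_def using sum.remove[OF fin p, of "\<lambda>i. (u(p:=a)) i * w i"] by simp
  also have "(\<Sum>i\<in>{0..n+1}-{p}. (u(p:=a)) i * w i) = (\<Sum>i\<in>{0..n+1}-{p}. u i * w i)"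
    by (rule sum.cong) auto
  finally have 1: "Fw n w (u(p := a)) = a * w p + (\<Sum>i\<in>{0..n+1}-{p}. u i * w i)" .
  have 2: "Fw n w u = u p * w p + (\<Sum>i\<in>{0..n+1}-{p}. u i * w i)"
    unfolding Fw_def using sum.remove[OF fin p, of "\<lambda>i. u i * w i"] by simp
  show ?thesis using 1 2 by simp
qed

lemma Fw_minus:
  assumes "p \<le> n+1" "d \<le> u p"
  shows "Fw n w (u(p := u p - d)) + d * w p = Fw n w u"
proof -
  have h: "(u p - d) * w p + d * w p = u p * w p" using assms(2) by (simp add: add_mult_distrib[symmetric])
  show ?thesis using Fw_upd[OF assms(1), of w u "u p - d"] h by linarith
qed

lemma Fw_plus:
  assumes "p \<le> n+1"
  shows "Fw n w (u(p := u p + d)) = Fw n w u + d * w p"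
  using Fw_upd[OF assms(1), of w u "u p + d"] by (simp add: add_mult_distrib)

lemma Fw_add: "Fw n w (\<lambda>i. u i + u' i) = Fw n w u + Fw n w u'"
  unfolding Fw_def by (simp add: add_mult_distrib sum.distrib)

lemma Fw_mult: "Fw n w (\<lambda>i. k * u i) = k * Fw n w u"
  unfolding Fw_def by (subst sum_distrib_left) (simp add: mult.assoc)

lemma Fw_single: "p \<le> n+1 \<Longrightarrow> Fw n w ((\<lambda>_. 0)(p := 1)) = w p"
  using Fw_upd[of p n w "\<lambda>_. 0" 1] by (simp add: Fw_def)

lemma sgen_I1: "b \<ge> 1 \<Longrightarrow> b * sgen b n i = sgen b n (Suc i) + (b - 1)"
  unfolding sgen_def by (simp add: algebra_simps)

lemma int_sgen: "int (sgen b n i) = (int b + 1) * int b ^ n * int b ^ i + 1"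
  unfolding sgen_def by (simp add: power_add algebra_simps)

fun Pr :: "nat \<Rightarrow> nat \<Rightarrow> nat" where
  "Pr b 0 = 0" | "Pr b (Suc k) = b * Pr b k + 1"

lemma Pr_eq0: "a * Pr (Suc a) k + 1 = (Suc a) ^ k"
proof (induction k)
  case (Suc k)
  have "a * Pr (Suc a) (Suc k) + 1 = Suc a * (a * Pr (Suc a) k + 1)" by (simp add: algebra_simps)
  then show ?case using Suc.IH by (metis power_Suc)
qed simp

lemma Pr_eq: "b \<ge> 1 \<Longrightarrow> (b - 1) * Pr b k + 1 = b ^ k"
  using Pr_eq0[of "b-1" k] by simp

lemma Pr_mono: "b \<ge> 1 \<Longrightarrow> k \<le> l \<Longrightarrow> Pr b k \<le> Pr b l"
proof (induction l)
  case (Suc l)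
  then show ?case
    by (cases "k = Suc l") (auto simp: le_Suc_eq intro: le_trans[of _ "Pr b l"] )
qed simp

lemma Pr_le: "b \<ge> 2 \<Longrightarrow> Pr b k + 1 \<le> b ^ k"
proof -
  assume b: "b \<ge> 2"
  have "1 * Pr b k \<le> (b-1) * Pr b k" using b by (intro mult_le_mono1) simp
  then show ?thesis using Pr_eq[of b k] b by linarith
qed

context
  fixes b n :: nat
  assumes b2: "b \<ge> 2" and n2: "n \<ge> 2"
begin

lemma J1:
  defines "P \<equiv> Pr b n"
  defines "X \<equiv> 2 + (b*b - 1) * b^n - P"
  shows "sgen b n (n+2) = (P - 1) * sgen b n 1 + X * sgen b n 0 \<and> X \<ge> 2"
proof -
  have PQ: "(b - 1) * P + 1 = b ^ n" using Pr_eq[of b n] b2 by (simp add: P_def)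
  have P3: "P \<ge> 3" proof -
    have "Pr b 2 \<le> P" unfolding P_def using Pr_mono[of b 2 n] b2 n2 by simp
    moreover have "Pr b 2 = b + 1" by (simp add: numeral_2_eq_2)
    ultimately show ?thesis using b2 by simp
  qed
  have PleQ: "P \<le> b^n" using Pr_le[of b n] b2 by (simp add: P_def)
  have "b * b \<ge> 2 * 2" using b2 by (intro mult_le_mono) auto
  then have bb: "b * b - 1 \<ge> 3" by simp
  have "(b*b-1)*b^n \<ge> 1 * b^n" using bb by (intro mult_le_mono) auto
  then have X2: "X \<ge> 2" unfolding X_def using PleQ by linarith
  define B where "B = int b"
  define p where "p = int P"
  define Q where "Q = B ^ n"
  have hQ: "Q = (B - 1) * p + 1" using arg_cong[OF PQ, of int] b2 unfolding Q_def B_def p_def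
    by (simp add: of_nat_diff)
  have hP: "P \<le> 2 + (b*b-1)*b^n" using X2 unfolding X_def
    using \<open>(b*b-1)*b^n \<ge> 1 * b^n\<close> PleQ by linarith
  have iX: "int X = 2 + (B*B - 1) * Q - p"
  proof -
    have "int X = int (2 + (b*b-1)*b^n) - int P" by (simp only: X_def of_nat_diff[OF hP])
    also have "\<dots> = 2 + (B*B - 1) * Q - p"
    proof -
      have "b * b \<ge> 1" using bb by linarith
      then have "int (b*b - 1) = B*B - 1" unfolding B_def by (simp add: of_nat_diff)
      then show ?thesis unfolding Q_def B_def p_def by simp
    qed
    finally show ?thesis .
  qed
  have poly: "(B + 1) * Q * (B * (B * Q)) + 1 = (p - 1) * ((B + 1) * Q * B + 1) + (2 + (B*B - 1)*Q - p) * ((B+1)*Q + 1)"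
    unfolding hQ by algebra
  have "int (sgen b n (n+2)) = int ((P - 1) * sgen b n 1 + X * sgen b n 0)"
    using P3 b2 unfolding int_sgen of_nat_add of_nat_mult iX
    apply (simp add: of_nat_diff p_def[symmetric] B_def[symmetric] Q_def[symmetric] power_add)
    using poly by (simp add: Q_def)
  then have "sgen b n (n+2) = (P - 1) * sgen b n 1 + X * sgen b n 0" by (simp only: of_nat_eq_iff)
  then show ?thesis using X2 by simp
qed

end

lemma Fw_wadd: "Fw n w1 u + Fw n w2 u = Fw n (\<lambda>i. w1 i + w2 i) u"
  unfolding Fw_def by (simp add: sum.distrib add_mult_distrib2)

lemma Fw_wmult: "Fw n (\<lambda>i. k * w i) u = k * Fw n w u"
  unfolding Fw_def by (subst sum_distrib_left) (simp add: ac_simps)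

lemma Fw_from1: "u 0 = 0 \<Longrightarrow> Fw n w u = (\<Sum>i=1..n+1. u i * w i)"
  unfolding Fw_def using sum.atLeast_Suc_atMost[of 0 "n+1" "\<lambda>i. u i * w i"] by simp

lemma Fw_Pr: "Fw n (Pr b) u = (\<Sum>i=1..n+1. u i * Pr b i)"
  unfolding Fw_def using sum.atLeast_Suc_atMost[of 0 "n+1" "\<lambda>i. u i * Pr b i"] by simp

context
  fixes b n :: nat
  assumes b2: "b \<ge> 2" and n2: "n \<ge> 2" and b3: "b mod 3 \<noteq> 1"
begin

lemma key_rel: "Fw n (sgen b n) t + (b - 1) * Fw n (Pr b) t = sgen b n 0 * Fw n (\<lambda>i. b ^ i) t"
proof -
  have pt: "sgen b n i + (b - 1) * Pr b i = sgen b n 0 * b ^ i" for i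
  proof -
    define X where "X = (b - 1) * Pr b i"
    define Y where "Y = ((b+1)*b^n) * b^i"
    define Z where "Z = b ^ i"
    have A: "X + 1 = Z" using Pr_eq[of b i] b2 unfolding X_def Z_def by simp
    have B: "sgen b n i = Y + 1" unfolding sgen_def Y_def by (simp add: power_add algebra_simps)
    have C: "sgen b n 0 * b ^ i = Y + Z" unfolding sgen_def Y_def Z_def by (simp add: algebra_simps)
    show ?thesis unfolding X_def[symmetric] C using A B by simp
  qed
  have e1: "Fw n (sgen b n) t + Fw n (\<lambda>i. (b-1)*Pr b i) t = Fw n (\<lambda>i. sgen b n i + (b-1)*Pr b i) t"
    by (rule Fw_wadd)
  have e2: "Fw n (\<lambda>i. (b-1)*Pr b i) t = (b-1)*Fw n (Pr b) t" by (rule Fw_wmult)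
  have e3: "(\<lambda>i. sgen b n i + (b-1)*Pr b i) = (\<lambda>i. sgen b n 0 * b^i)" by (rule ext) (rule pt)
  have e4: "Fw n (\<lambda>i. sgen b n 0 * b^i) t = sgen b n 0 * Fw n (\<lambda>i. b^i) t" by (rule Fw_wmult)
  show ?thesis using e1 unfolding e2 e3 e4 .
qed

end

lemma Fw_zero: "Fw n w (\<lambda>_. 0) = 0" by (simp add: Fw_def)

lemma sub_add: "x \<in> submonoid_gen A \<Longrightarrow> y \<in> submonoid_gen A \<Longrightarrow> x + y \<in> submonoid_gen A"
  by (induction x rule: submonoid_gen.induct) (auto simp: add.assoc intro: submonoid_gen.add)

lemma sub_mult: "x \<in> submonoid_gen A \<Longrightarrow> k * x \<in> submonoid_gen A"
  by (induction k) (auto intro: sub_add submonoid_gen.zero)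

lemma sub_gen: "a \<in> A \<Longrightarrow> a \<in> submonoid_gen A"
  using submonoid_gen.add[of a A 0] submonoid_gen.zero by simp

lemma Fw_in_T: "Fw n (sgen b n) u \<in> T_b' b n"
proof -
  have "\<And>N. (\<Sum>i=0..N. u i * sgen b n i) \<in> T_b' b n"
  proof -
    fix N show "(\<Sum>i=0..N. u i * sgen b n i) \<in> T_b' b n"
    proof (induction N)
      case 0 then show ?case unfolding T_b'_def by (auto intro: sub_mult sub_gen)
    next
      case (Suc N)
      have "u (Suc N) * sgen b n (Suc N) \<in> T_b' b n" unfolding T_b'_def by (auto intro: sub_mult sub_gen)
      then show ?case using Suc unfolding T_b'_def by (simp add: sub_add)
    qed
  qed
  then show ?thesis unfolding Fw_def .
qed

definition supp :: "nat \<Rightarrow> (nat \<Rightarrow> nat) \<Rightarrow> bool" where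
  "supp n u \<longleftrightarrow> (\<forall>j>n+1. u j = 0)"

lemma supp_upd: "supp n u \<Longrightarrow> p \<le> n+1 \<Longrightarrow> supp n (u(p := a))"
  unfolding supp_def by auto

context
  fixes b n :: nat
  assumes b2: "b \<ge> 2" and n2: "n \<ge> 2"
begin

lemma big_rep: "\<exists>u. supp n u \<and> u 0 \<ge> 2 \<and> sgen b n (n+2+d) = Fw n (sgen b n) u"
proof (induction d)
  case 0
  define P where "P = Pr b n"
  define X where "X = 2 + (b*b - 1) * b^n - P"
  have J: "sgen b n (n+2) = (P - 1) * sgen b n 1 + X * sgen b n 0 \<and> X \<ge> 2"
    using J1[OF b2 n2] unfolding P_def X_def by simp
  define u where "u = ((\<lambda>_::nat. 0::nat)(0 := X))(1 := P - 1)"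
  have F1: "Fw n (sgen b n) ((\<lambda>_::nat. 0::nat)(0 := X)) = X * sgen b n 0"
    using Fw_upd[of 0 n "sgen b n" "\<lambda>_. 0" X] by (simp add: Fw_zero)
  have "Fw n (sgen b n) u = X * sgen b n 0 + (P - 1) * sgen b n 1"
    using Fw_upd[of 1 n "sgen b n" "(\<lambda>_::nat. 0::nat)(0 := X)" "P - 1"] F1 unfolding u_def by simp
  moreover have "supp n u" unfolding u_def supp_def by auto
  moreover have "u 0 \<ge> 2" using J unfolding u_def by simp
  ultimately show ?case using J by (intro exI[of _ u]) simp
next
  case (Suc d)
  then obtain u where u: "supp n u" "u 0 \<ge> 2" "sgen b n (n+2+d) = Fw n (sgen b n) u" by blast
  define v where "v = (\<lambda>i. b * u i)"
  define v1 where "v1 = v(0 := v 0 - b)"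
  define v2 where "v2 = v1(1 := v1 1 + 1)"
  have Fv: "Fw n (sgen b n) v = b * Fw n (sgen b n) u" unfolding v_def by (rule Fw_mult)
  have h2: "b * 2 \<le> b * u 0" using u(2) by simp
  then have h3: "b + b \<le> v 0" unfolding v_def by (simp only: mult_2_right)
  then have bv0: "b \<le> v 0" by linarith
  have Fv1: "Fw n (sgen b n) v1 + b * sgen b n 0 = Fw n (sgen b n) v"
    unfolding v1_def by (rule Fw_minus) (use bv0 in auto)
  have Fv2: "Fw n (sgen b n) v2 = Fw n (sgen b n) v1 + sgen b n 1"
    unfolding v2_def using Fw_plus[of 1 n "sgen b n" v1 1] by simp
  have I0: "b * sgen b n 0 = sgen b n 1 + (b - 1)" using sgen_I1[of b n 0] b2 by simp
  have I1: "b * sgen b n (n+2+d) = sgen b n (n+2+Suc d) + (b - 1)" using sgen_I1[of b n "n+2+d"] b2 by simp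
  have "Fw n (sgen b n) v2 = sgen b n (n+2+Suc d)"
  proof -
    have "b * sgen b n (n+2+d) = b * Fw n (sgen b n) u" using u(3) by simp
    then show ?thesis using Fv Fv1 Fv2 I0 I1 by linarith
  qed
  moreover have "supp n v2" using u(1) unfolding v2_def v1_def v_def supp_def by auto
  moreover have "v2 0 \<ge> 2"
  proof -
    have "v 0 - b \<ge> b" using h3 by linarith
    then show ?thesis unfolding v2_def v1_def using b2 by simp
  qed
  ultimately show ?case by metis
qed

lemma gen_rep: "\<exists>u. supp n u \<and> sgen b n j = Fw n (sgen b n) u"
proof (cases "j \<le> n+1")
  case True
  then show ?thesis using Fw_single[OF True, of "sgen b n"] unfolding supp_def
    by (intro exI[of _ "(\<lambda>_. 0)(j := 1)"]) auto
next
  case False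
  then obtain d where "j = n+2+d" by (metis add_Suc_right le_Suc_ex not_less_eq_eq one_add_one add_2_eq_Suc' Suc_eq_plus1 add.commute)
  then show ?thesis using big_rep[of d] by blast
qed

lemma S_rep: "x \<in> T_b' b n \<Longrightarrow> \<exists>u. supp n u \<and> x = Fw n (sgen b n) u"
  unfolding T_b'_def
proof (induction x rule: submonoid_gen.induct)
  case zero
  then show ?case by (intro exI[of _ "\<lambda>_. 0"]) (simp add: supp_def Fw_zero)
next
  case (add a x)
  then obtain j where "a = sgen b n j" by auto
  then obtain u1 where u1: "supp n u1" "a = Fw n (sgen b n) u1" using gen_rep by blast
  obtain u where u: "supp n u" "x = Fw n (sgen b n) u" using add by blast
  show ?case using u u1 Fw_add[of n "sgen b n" u1 u]
    by (intro exI[of _ "\<lambda>i. u1 i + u i"]) (auto simp: supp_def)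
qed

end

lemma diff_mult_add: "k \<le> a \<Longrightarrow> (a - k) * x + k * x = a * (x::nat)"
  by (simp add: add_mult_distrib[symmetric])

definition red :: "nat \<Rightarrow> nat \<Rightarrow> (nat \<Rightarrow> nat) \<Rightarrow> bool" where
  "red b n u \<longleftrightarrow> (\<exists>u' k. supp n u' \<and> Fw n (sgen b n) u = Fw n (sgen b n) u' + k * sgen b n 0 \<and>
      (Fw n (sgen b n) u' < Fw n (sgen b n) u \<or> Fw n (sgen b n) u' = Fw n (sgen b n) u \<and> Fw n (\<lambda>i. i) u' < Fw n (\<lambda>i. i) u))"

context
  fixes b n :: nat
  assumes b2: "b \<ge> 2" and n2: "n \<ge> 2"
begin

abbreviation "s \<equiv> sgen b n"
abbreviation "F \<equiv> Fw n (sgen b n)"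
abbreviation "mu \<equiv> Fw n (\<lambda>i. i)"

lemma I: "b * s i = s (Suc i) + (b - 1)"
  using sgen_I1[of b n i] b2 by simp

lemma s0_pos: "s 0 > 0" unfolding sgen_def by simp

lemma rule0: "supp n u \<Longrightarrow> u 0 > 0 \<Longrightarrow> red b n u"
proof -
  assume su: "supp n u" and p: "u 0 > 0"
  define u' where "u' = u(0 := u 0 - u 0)"
  have "F u' + u 0 * s 0 = F u" unfolding u'_def by (rule Fw_minus) auto
  moreover have "u 0 * s 0 > 0" using p s0_pos by simp
  moreover have "supp n u'" unfolding u'_def using su by (simp add: supp_upd)
  ultimately have "F u' < F u" "F u = F u' + u 0 * s 0" "supp n u'" by linarith+
  then show ?thesis unfolding red_def
    by (intro exI[of _ u'] exI[of _ "u 0"]) blast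
qed

lemma rule1:
  assumes su: "supp n u" and i: "1 \<le> i" "i \<le> n" and ui: "b \<le> u i" and j: "1 \<le> j" "j \<le> i"
    and uj: "1 \<le> (u(i := u i - b)) j"
  shows "red b n u"
proof -
  define u1 where "u1 = u(i := u i - b)"
  define u2 where "u2 = u1(j := u1 j - 1)"
  define u3 where "u3 = u2(Suc i := u2 (Suc i) + 1)"
  define u4 where "u4 = u3(j - 1 := u3 (j - 1) + b)"
  have F1: "Fw n w u1 + b * w i = Fw n w u" for w unfolding u1_def by (rule Fw_minus) (use i ui in auto)
  have F2: "Fw n w u2 + 1 * w j = Fw n w u1" for w unfolding u2_def by (rule Fw_minus) (use i j uj u1_def in auto)
  have F3: "Fw n w u3 = Fw n w u2 + 1 * w (Suc i)" for w unfolding u3_def by (rule Fw_plus) (use i in auto)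
  have F4: "Fw n w u4 = Fw n w u3 + b * w (j - 1)" for w unfolding u4_def by (rule Fw_plus) (use i j in auto)
  have id: "b * s i + s j = s (Suc i) + b * s (j - 1)"
    using I[of i] I[of "j - 1"] j by simp
  have eqF: "F u4 = F u" using F1[of s] F2[of s] F3[of s] F4[of s] id by linarith
  have mueq: "mu u4 + b * i + j = mu u + Suc i + b * (j - 1)"
    using F1[of "\<lambda>i. i"] F2[of "\<lambda>i. i"] F3[of "\<lambda>i. i"] F4[of "\<lambda>i. i"] by simp
  have ineq: "Suc i + b * (j - 1) < b * i + j"
  proof -
    define d where "d = i - j"
    have d: "i = (j - 1) + Suc d" using j unfolding d_def by arith
    have "b * i = b * (j - 1) + b * Suc d" using d by (simp add: add_mult_distrib2)
    moreover have "b * Suc d \<ge> 2 * Suc d" using b2 by (intro mult_le_mono1)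
    then have "b * Suc d \<ge> 2 * d + 2" by simp
    ultimately show ?thesis using d j by linarith
  qed
  have "supp n u4" using su i j unfolding u4_def u3_def u2_def u1_def supp_def by auto
  then show ?thesis unfolding red_def using eqF mueq ineq
    by (intro exI[of _ u4] exI[of _ 0]) auto
qed

lemma snn: "s n + s (n+1) = ((b+1)*b^n) * ((b+1)*b^n) + 2"
  unfolding sgen_def by (simp add: algebra_simps power_add mult_2)

lemma s0c: "s 0 = (b+1)*b^n + 1" unfolding sgen_def by simp

lemma J3: "(b-1)*(s n + s (n+1)) = ((b-1)*((b+1)*b^n - 1)) * s 0 + 3*(b-1)"
proof -
  obtain d where d: "(b+1)*b^n = Suc d" using gr0_implies_Suc[of "(b+1)*b^n"] b2 by auto
  obtain a where a: "b = Suc a" using b2 by (cases b) auto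
  show ?thesis unfolding snn s0c d unfolding a by (simp add: algebra_simps)
qed

lemma Kpos: "(b-1)*((b+1)*b^n - 1) \<ge> 1"
proof -
  have "b^n \<ge> 1" using b2 by simp
  then have "(b+1)*b^n \<ge> (b+1)*1" by (rule mult_le_mono2)
  then have "(b+1)*b^n \<ge> b+1" by simp
  then have h1: "(b+1)*b^n - 1 \<ge> 1" using b2 by linarith
  have h2: "b - 1 \<ge> 1" using b2 by simp
  show ?thesis using mult_le_mono[OF h2 h1] by simp
qed

lemma J2:
  defines "P \<equiv> Pr b n"
  defines "X \<equiv> 2 + (b*b - 1) * b^n - P"
  shows "b * s (n+1) = (P - 2) * s 1 + (X + b) * s 0" "P \<ge> 3"
proof -
  have J: "s (n+2) = (P - 1) * s 1 + X * s 0" using J1[OF b2 n2] unfolding P_def X_def by simp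
  show P3: "P \<ge> 3" proof -
    have "Pr b 2 \<le> P" unfolding P_def using Pr_mono[of b 2 n] b2 n2 by simp
    moreover have "Pr b 2 = b + 1" by (simp add: numeral_2_eq_2)
    ultimately show ?thesis using b2 by simp
  qed
  have "b * s (n+1) = s (n+2) + (b-1)" using I[of "n+1"] by simp
  moreover have "(P - 2) * s 1 + 1 * s 1 = (P - 1) * s 1"
    using diff_mult_add[of 1 "P - 1" "s 1"] P3 by (simp add: numeral_2_eq_2)
  moreover have "b * s 0 = s 1 + (b - 1)" using I[of 0] by simp
  moreover have "(X + b) * s 0 = X * s 0 + b * s 0" by (simp add: add_mult_distrib)
  ultimately show "b * s (n+1) = (P - 2) * s 1 + (X + b) * s 0" using J by linarith
qed

lemma rule2:
  assumes su: "supp n u" and ub: "b \<le> u (n+1)"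
  shows "red b n u"
proof -
  define P where "P = Pr b n"
  define X where "X = 2 + (b*b - 1) * b^n - P"
  have J: "b * s (n+1) = (P - 2) * s 1 + (X + b) * s 0" using J2 unfolding P_def X_def by blast
  define u1 where "u1 = u(n+1 := u (n+1) - b)"
  define u2 where "u2 = u1(1 := u1 1 + (P - 2))"
  have F1: "F u1 + b * s (n+1) = F u" unfolding u1_def by (rule Fw_minus) (use ub in auto)
  have F2: "F u2 = F u1 + (P - 2) * s 1" unfolding u2_def by (rule Fw_plus) (use n2 in auto)
  have eq: "F u = F u2 + (X + b) * s 0" using F1 F2 J by linarith
  have pos: "(X + b) * s 0 > 0" using b2 s0_pos by simp
  have "supp n u2" using su n2 unfolding u2_def u1_def supp_def by auto
  then show ?thesis unfolding red_def using eq pos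
    by (intro exI[of _ u2] exI[of _ "X + b"]) auto
qed

lemma rule3:
  assumes su: "supp n u" and ub: "b \<le> u n" "b - 1 \<le> u (n+1)"
  shows "red b n u"
proof -
  define P where "P = Pr b n"
  define X where "X = 2 + (b*b - 1) * b^n - P"
  have J: "b * s (n+1) = (P - 2) * s 1 + (X + b) * s 0" using J2 unfolding P_def X_def by blast
  have P3: "P \<ge> 3" using J2 unfolding P_def by blast
  define u1 where "u1 = u(n := u n - b)"
  define u2 where "u2 = u1(n+1 := u1 (n+1) - (b - 1))"
  define u3 where "u3 = u2(1 := u2 1 + (P - 3))"
  have F1: "F u1 + b * s n = F u" unfolding u1_def by (rule Fw_minus) (use ub in auto)
  have F2: "F u2 + (b - 1) * s (n+1) = F u1" unfolding u2_def by (rule Fw_minus) (use ub u1_def in auto)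
  have F3: "F u3 = F u2 + (P - 3) * s 1" unfolding u3_def by (rule Fw_plus) (use n2 in auto)
  have a1: "b * s n = s (n+1) + (b - 1)" using I[of n] by simp
  have a2: "(b - 1) * s (n+1) + 1 * s (n+1) = b * s (n+1)" using diff_mult_add[of 1 b] b2 by simp
  have a3: "(P - 3) * s 1 + 1 * s 1 = (P - 2) * s 1" using diff_mult_add[of 1 "P - 2" "s 1"] P3
    by (simp add: numeral_3_eq_3 numeral_2_eq_2)
  have a4: "b * s 0 = s 1 + (b - 1)" using I[of 0] by simp
  have a5: "(X + 2*b) * s 0 = (X + b) * s 0 + b * s 0" by (simp add: add_mult_distrib)
  have eq: "F u = F u3 + (X + 2*b) * s 0" using F1 F2 F3 J a1 a2 a3 a4 a5 by linarith
  have pos: "(X + 2*b) * s 0 > 0" using b2 s0_pos by simp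
  have "supp n u3" using su n2 unfolding u3_def u2_def u1_def supp_def by auto
  then show ?thesis unfolding red_def using eq pos
    by (intro exI[of _ u3] exI[of _ "X + 2*b"]) auto
qed

lemma rule4_common:
  assumes su: "supp n u" and ub: "b - 1 \<le> u n" "b - 1 \<le> u (n+1)"
  defines "u2 \<equiv> (u(n := u n - (b - 1)))(n+1 := u (n+1) - (b - 1))"
  defines "K \<equiv> (b-1)*((b+1)*b^n - 1)"
  shows "F u = F u2 + K * s 0 + 3 * (b - 1)" "supp n u2" "\<And>j. j < n \<Longrightarrow> u2 j = u j"
proof -
  define u1 where "u1 = u(n := u n - (b - 1))"
  have F1: "F u1 + (b - 1) * s n = F u" unfolding u1_def by (rule Fw_minus) (use ub in auto)
  have u2e: "u2 = u1(n+1 := u1 (n+1) - (b - 1))" unfolding u2_def u1_def by simp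
  have F2: "F u2 + (b - 1) * s (n+1) = F u1" unfolding u2e by (rule Fw_minus) (use ub u1_def in auto)
  have "(b-1)*(s n + s (n+1)) = (b - 1) * s n + (b - 1) * s (n+1)" by (simp add: add_mult_distrib2)
  then show "F u = F u2 + K * s 0 + 3 * (b - 1)" using F1 F2 J3 unfolding K_def by linarith
  show "supp n u2" using su unfolding u2_def supp_def by auto
  show "\<And>j. j < n \<Longrightarrow> u2 j = u j" unfolding u2_def by auto
qed

lemma rule4a:
  assumes su: "supp n u" and ub: "b - 1 \<le> u n" "b - 1 \<le> u (n+1)" and u1: "3 \<le> u 1"
  shows "red b n u"
proof -
  define u2 where "u2 = (u(n := u n - (b - 1)))(n+1 := u (n+1) - (b - 1))"
  define K where "K = (b-1)*((b+1)*b^n - 1)"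
  have C: "F u = F u2 + K * s 0 + 3 * (b - 1)" "supp n u2" "\<And>j. j < n \<Longrightarrow> u2 j = u j"
    using rule4_common[OF su ub] unfolding u2_def K_def by auto
  define u3 where "u3 = u2(1 := u2 1 - 3)"
  have F3: "F u3 + 3 * s 1 = F u2" unfolding u3_def by (rule Fw_minus) (use C(3)[of 1] n2 u1 in auto)
  have a4: "b * s 0 = s 1 + (b - 1)" using I[of 0] by simp
  have eq: "F u = F u3 + (K + 3 * b) * s 0" using F3 C(1) a4 by (simp add: add_mult_distrib)
  have pos: "(K + 3*b) * s 0 > 0" using b2 s0_pos by simp
  have "supp n u3" using C(2) n2 unfolding u3_def supp_def by auto
  then show ?thesis unfolding red_def using eq pos
    by (intro exI[of _ u3] exI[of _ "K + 3*b"]) auto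
qed

lemma rule4b:
  assumes su: "supp n u" and ub: "b - 1 \<le> u n" "b - 1 \<le> u (n+1)" and n3: "3 \<le> n" and u1: "1 \<le> u 2"
  shows "red b n u"
proof -
  define u2 where "u2 = (u(n := u n - (b - 1)))(n+1 := u (n+1) - (b - 1))"
  define K where "K = (b-1)*((b+1)*b^n - 1)"
  have C: "F u = F u2 + K * s 0 + 3 * (b - 1)" "supp n u2" "\<And>j. j < n \<Longrightarrow> u2 j = u j"
    using rule4_common[OF su ub] unfolding u2_def K_def by auto
  define u3 where "u3 = u2(2 := u2 2 - 1)"
  define u4 where "u4 = u3(1 := u3 1 + (b - 2))"
  have F3: "F u3 + 1 * s 2 = F u2" unfolding u3_def by (rule Fw_minus) (use C(3)[of 2] n3 u1 in auto)
  have F4: "F u4 = F u3 + (b - 2) * s 1" unfolding u4_def by (rule Fw_plus) (use n3 in auto)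
  have a4: "b * s 0 = s 1 + (b - 1)" using I[of 0] by simp
  have a5: "b * s 1 = s 2 + (b - 1)" using I[of 1] by (simp add: numeral_2_eq_2)
  have a6: "(b - 2) * s 1 + 2 * s 1 = b * s 1" using diff_mult_add[of 2 b] b2 by simp
  have eq: "F u = F u4 + (K + 2 * b) * s 0" using F3 F4 C(1) a4 a5 a6 by (simp add: add_mult_distrib)
  have pos: "(K + 2*b) * s 0 > 0" using b2 s0_pos by simp
  have "supp n u4" using C(2) n3 unfolding u4_def u3_def supp_def by auto
  then show ?thesis unfolding red_def using eq pos
    by (intro exI[of _ u4] exI[of _ "K + 2*b"]) auto
qed

lemma rule4c:
  assumes su: "supp n u" and ub: "b - 1 \<le> u n" "b - 1 \<le> u (n+1)" and i: "3 \<le> i" "i < n" and u1: "1 \<le> u i"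
  shows "red b n u"
proof -
  define u2 where "u2 = (u(n := u n - (b - 1)))(n+1 := u (n+1) - (b - 1))"
  define K where "K = (b-1)*((b+1)*b^n - 1)"
  have C: "F u = F u2 + K * s 0 + 3 * (b - 1)" "supp n u2" "\<And>j. j < n \<Longrightarrow> u2 j = u j"
    using rule4_common[OF su ub] unfolding u2_def K_def by auto
  define u3 where "u3 = u2(i := u2 i - 1)"
  define u4 where "u4 = u3(i - 1 := u3 (i - 1) + (b - 1))"
  define u5 where "u5 = u4(i - 2 := u4 (i - 2) + (b - 1))"
  define u6 where "u6 = u5(i - 3 := u5 (i - 3) + b)"
  have F3: "F u3 + 1 * s i = F u2" unfolding u3_def by (rule Fw_minus) (use C(3)[of i] i u1 in auto)
  have F4: "F u4 = F u3 + (b - 1) * s (i - 1)" unfolding u4_def by (rule Fw_plus) (use i in auto)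
  have F5: "F u5 = F u4 + (b - 1) * s (i - 2)" unfolding u5_def by (rule Fw_plus) (use i in auto)
  have F6: "F u6 = F u5 + b * s (i - 3)" unfolding u6_def by (rule Fw_plus) (use i in auto)
  have a1: "b * s (i - 1) = s i + (b - 1)" using I[of "i - 1"] i by simp
  have e2: "Suc (i - 2) = i - 1" using i by arith
  have e3: "Suc (i - 3) = i - 2" using i by arith
  have a2: "b * s (i - 2) = s (i - 1) + (b - 1)" using I[of "i - 2"] unfolding e2 .
  have a3: "b * s (i - 3) = s (i - 2) + (b - 1)" using I[of "i - 3"] unfolding e3 .
  have a6: "(b - 1) * x + 1 * x = b * x" for x using diff_mult_add[of 1 b x] b2 by simp
  have eq: "F u = F u6 + K * s 0" using F3 F4 F5 F6 C(1) a1 a2 a3 a6[of "s (i - 1)"] a6[of "s (i - 2)"] by linarith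
  have "K \<ge> 1" unfolding K_def by (rule Kpos)
  then have pos: "K * s 0 > 0" using s0_pos by (intro mult_pos_pos) auto
  have "supp n u6" using C(2) i unfolding u6_def u5_def u4_def u3_def supp_def by auto
  then show ?thesis unfolding red_def using eq pos
    by (intro exI[of _ u6] exI[of _ "K"]) auto
qed

end

context
  fixes b n :: nat
  assumes b2: "b \<ge> 2" and n2: "n \<ge> 2"
begin

lemma not_red_R:
  assumes su: "supp n u" and nr: "\<not> red b n u"
  shows "u \<in> R_b' b n"
proof -
  have u0: "u 0 = 0" using rule0[OF b2 n2 su] nr by auto
  have NR1: "(u(i := u i - b)) j = 0" if h: "1 \<le> i" "i \<le> n" "b \<le> u i" "1 \<le> j" "j \<le> i" for i j
  proof (rule ccontr)
    assume "(u(i := u i - b)) j \<noteq> 0"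
    then have "1 \<le> (u(i := u i - b)) j" by simp
    from rule1[OF b2 n2 su h this] nr show False by simp
  qed
  have NR2: "u (n+1) < b"
  proof (rule ccontr)
    assume "\<not> u (n+1) < b"
    then have "b \<le> u (n+1)" by simp
    from rule2[OF b2 n2 su this] nr show False by simp
  qed
  have NR3: "\<not> (b \<le> u n \<and> b - 1 \<le> u (n+1))"
  proof
    assume "b \<le> u n \<and> b - 1 \<le> u (n+1)"
    with rule3[OF b2 n2 su] nr show False by simp
  qed
  have NR4a: "u 1 \<le> 2" if h: "b - 1 \<le> u n" "b - 1 \<le> u (n+1)"
  proof (rule ccontr)
    assume "\<not> u 1 \<le> 2"
    then have "3 \<le> u 1" by simp
    from rule4a[OF b2 n2 su h this] nr show False by simp
  qed
  have NR4b: "u 2 = 0" if h: "b - 1 \<le> u n" "b - 1 \<le> u (n+1)" "3 \<le> n"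
  proof (rule ccontr)
    assume "u 2 \<noteq> 0"
    then have "1 \<le> u 2" by simp
    from rule4b[OF b2 n2 su h this] nr show False by simp
  qed
  have NR4c: "u i = 0" if h: "b - 1 \<le> u n" "b - 1 \<le> u (n+1)" "3 \<le> i" "i < n" for i
  proof (rule ccontr)
    assume "u i \<noteq> 0"
    then have "1 \<le> u i" by simp
    from rule4c[OF b2 n2 su h this] nr show False by simp
  qed
  have A1: "\<forall>j. (j < 1 \<or> j > n + 1) \<longrightarrow> u j = 0" using u0 su unfolding supp_def by auto
  have A2: "\<forall>j\<in>{1..n+1}. u j \<le> b"
  proof
    fix j assume j: "j \<in> {1..n+1}"
    show "u j \<le> b"
    proof (cases "j \<le> n")
      case True
      show ?thesis proof (rule ccontr)
        assume "\<not> u j \<le> b"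
        then have "b \<le> u j" by simp
        from NR1[OF _ True this, of j] j have "u j - b = 0" by simp
        with \<open>\<not> u j \<le> b\<close> show False by simp
      qed
    next
      case False
      then have "j = n+1" using j by simp
      then show ?thesis using NR2 by simp
    qed
  qed
  have A3: "\<forall>i\<in>{1..n+1}. u i = b \<longrightarrow> (\<forall>j. 1 \<le> j \<and> j < i \<longrightarrow> u j = 0)"
  proof (intro ballI impI allI)
    fix i j assume i: "i \<in> {1..n+1}" and ui: "u i = b" and j: "1 \<le> j \<and> j < i"
    have "i \<le> n" using NR2 ui i by (cases "i = n+1") auto
    from NR1[of i j] this i ui j show "u j = 0" by simp
  qed
  have A4: "u (n+1) \<le> b - 1" using NR2 by simp
  have A5: "u (n+1) = b - 1 \<longrightarrow> u n \<le> b - 1" using NR3 by auto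
  have A6: "(u n = b - 1 \<and> u (n+1) = b - 1) \<longrightarrow>
          (u 1 \<le> 2 \<and> (\<forall>i\<in>{1..n+1}. i \<notin> {1, n, n + 1} \<longrightarrow> u i = 0))"
  proof (intro impI conjI ballI)
    assume h: "u n = b - 1 \<and> u (n+1) = b - 1"
    then show "u 1 \<le> 2" using NR4a by simp
    fix i assume i: "i \<in> {1..n+1}" "i \<notin> {1, n, n+1}"
    then have "2 \<le> i" "i < n" by auto
    then show "u i = 0"
    proof (cases "i = 2")
      case True then show ?thesis using NR4b h \<open>i < n\<close> by simp
    next
      case False then show ?thesis using NR4c[of i] h \<open>2 \<le> i\<close> \<open>i < n\<close> by simp
    qed
  qed
  show ?thesis unfolding R_b'_def using A1 A2 A3 A4 A5 A6 by blast
qed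

lemma closure:
  "supp n u \<Longrightarrow> \<exists>t\<in>R_b' b n. \<exists>k. Fw n (sgen b n) u = Fw n (sgen b n) t + k * sgen b n 0"
proof (induction u rule: wf_induct[OF wf_measures[of "[\<lambda>u. Fw n (sgen b n) u, \<lambda>u. Fw n (\<lambda>i. i) u]"]])
  case (1 u)
  show ?case
  proof (cases "red b n u")
    case True
    obtain u' k where u': "supp n u'" "Fw n (sgen b n) u = Fw n (sgen b n) u' + k * sgen b n 0"
      "Fw n (sgen b n) u' < Fw n (sgen b n) u \<or> Fw n (sgen b n) u' = Fw n (sgen b n) u \<and> Fw n (\<lambda>i. i) u' < Fw n (\<lambda>i. i) u"
      using True[unfolded red_def] by blast
    have "(u', u) \<in> measures [\<lambda>u. Fw n (sgen b n) u, \<lambda>u. Fw n (\<lambda>i. i) u]"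
      using u'(3) by auto
    then obtain t k' where "t \<in> R_b' b n" "Fw n (sgen b n) u' = Fw n (sgen b n) t + k' * sgen b n 0"
      using 1 u'(1) by blast
    then show ?thesis using u'(2) by (intro bexI[of _ t] exI[of _ "k + k'"]) (auto simp: add_mult_distrib)
  next
    case False
    then show ?thesis using not_red_R 1(2) by (intro bexI[of _ u] exI[of _ 0]) auto
  qed
qed

end

definition Vd :: "nat \<Rightarrow> nat \<Rightarrow> (nat \<Rightarrow> nat) \<Rightarrow> bool" where
  "Vd b n t \<longleftrightarrow> (\<forall>i\<in>{1..n+1}. t i \<le> b \<and> (t i = b \<longrightarrow> (\<forall>j. 1 \<le> j \<and> j < i \<longrightarrow> t j = 0)))"

lemma R_Vd: "t \<in> R_b' b n \<Longrightarrow> Vd b n t"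
  unfolding R_b'_def Vd_def by blast

lemma bound:
  assumes b: "b \<ge> 2" and V: "Vd b n t"
  shows "k \<le> n+1 \<Longrightarrow> (\<Sum>i=1..k. t i * Pr b i) + 1 \<le> Pr b (Suc k)"
proof (induction k)
  case 0 then show ?case by simp
next
  case (Suc k)
  have IH: "(\<Sum>i=1..k. t i * Pr b i) + 1 \<le> Pr b (Suc k)" using Suc by simp
  have sumS: "(\<Sum>i=1..Suc k. t i * Pr b i) = (\<Sum>i=1..k. t i * Pr b i) + t (Suc k) * Pr b (Suc k)"
    by simp
  have tk: "t (Suc k) \<le> b" and tb: "t (Suc k) = b \<Longrightarrow> (\<forall>j. 1 \<le> j \<and> j < Suc k \<longrightarrow> t j = 0)"
    using V Suc.prems unfolding Vd_def by auto
  show ?case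
  proof (cases "t (Suc k) = b")
    case True
    have "(\<Sum>i=1..k. t i * Pr b i) = 0" using tb[OF True] by (intro sum.neutral) auto
    then show ?thesis using sumS True by simp
  next
    case False
    then have "t (Suc k) \<le> b - 1" using tk by simp
    then have "t (Suc k) * Pr b (Suc k) \<le> (b - 1) * Pr b (Suc k)" by (rule mult_le_mono1)
    moreover have "(b - 1) * Pr b (Suc k) + 1 * Pr b (Suc k) = b * Pr b (Suc k)"
      using diff_mult_add[of 1 b] b by simp
    moreover have "Pr b (Suc (Suc k)) = b * Pr b (Suc k) + 1" by simp
    ultimately show ?thesis using sumS IH by linarith
  qed
qed

lemma div_uniq: "A < (P::nat) \<Longrightarrow> (A + x * P) div P = x"
  by simp

lemma digits_uniq:
  assumes b: "b \<ge> 2" and V: "Vd b n t" and V': "Vd b n t'"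
  shows "k \<le> n+1 \<Longrightarrow> (\<Sum>i=1..k. t i * Pr b i) = (\<Sum>i=1..k. t' i * Pr b i) \<Longrightarrow> \<forall>i. 1 \<le> i \<and> i \<le> k \<longrightarrow> t i = t' i"
proof (induction k)
  case 0 then show ?case by simp
next
  case (Suc k)
  define A where "A = (\<Sum>i=1..k. t i * Pr b i)"
  define A' where "A' = (\<Sum>i=1..k. t' i * Pr b i)"
  have hA: "A < Pr b (Suc k)" using bound[OF b V, of k] Suc.prems unfolding A_def by simp
  have hA': "A' < Pr b (Suc k)" using bound[OF b V', of k] Suc.prems unfolding A'_def by simp
  have eq: "A + t (Suc k) * Pr b (Suc k) = A' + t' (Suc k) * Pr b (Suc k)"
    using Suc.prems(2) unfolding A_def A'_def by simp
  have tt: "t (Suc k) = t' (Suc k)"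
    using div_uniq[OF hA, of "t (Suc k)"] div_uniq[OF hA', of "t' (Suc k)"] eq by simp
  then have "A = A'" using eq by simp
  then have "\<forall>i. 1 \<le> i \<and> i \<le> k \<longrightarrow> t i = t' i" using Suc unfolding A_def A'_def by simp
  then show ?case using tt le_Suc_eq by auto
qed

context
  fixes b n :: nat
  assumes b2: "b \<ge> 2" and n2: "n \<ge> 2"
begin

lemma E_split1: "(\<Sum>i=1..n. t i * Pr b i) = (\<Sum>i=1..n-1. t i * Pr b i) + t n * Pr b n"
proof -
  obtain m' where nm: "n = Suc m'" using n2 by (cases n) auto
  show ?thesis unfolding nm by simp
qed

lemma E_split: "(\<Sum>i=1..n+1. t i * Pr b i) = (\<Sum>i=1..n-1. t i * Pr b i) + t n * Pr b n + t (n+1) * Pr b (n+1)"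
  using E_split1 by simp

lemma E_lt:
  assumes t: "t \<in> R_b' b n"
  shows "(\<Sum>i=1..n+1. t i * Pr b i) < sgen b n 0"
proof -
  have V: "Vd b n t" using R_Vd[OF t] .
  define L where "L = (\<Sum>i=1..n-1. t i * Pr b i)"
  define P1 where "P1 = Pr b n"
  define P2 where "P2 = Pr b (n+1)"
  have Es: "(\<Sum>i=1..n+1. t i * Pr b i) = L + t n * P1 + t (n+1) * P2"
    using E_split unfolding L_def P1_def P2_def .
  have bL: "L + 1 \<le> P1" using bound[OF b2 V, of "n-1"] n2 unfolding L_def P1_def
    by (simp add: Suc_diff_1)
  have bLn: "L + t n * P1 + 1 \<le> P2" using bound[OF b2 V, of n] E_split1 unfolding L_def P1_def P2_def
    by simp
  have e1: "(b - 1) * P1 + 1 = b ^ n" using Pr_eq[of b n] b2 unfolding P1_def by simp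
  have e2: "(b - 1) * P2 + 1 = b * b ^ n" using Pr_eq[of b "n+1"] b2 unfolding P2_def by simp
  have m: "sgen b n 0 = b * b ^ n + b ^ n + 1" unfolding sgen_def by (simp add: algebra_simps)
  have tR: "t (n+1) \<le> b - 1" "t (n+1) = b - 1 \<longrightarrow> t n \<le> b - 1"
    "(t n = b - 1 \<and> t (n+1) = b - 1) \<longrightarrow> (t 1 \<le> 2 \<and> (\<forall>i\<in>{1..n+1}. i \<notin> {1, n, n + 1} \<longrightarrow> t i = 0))"
    using t unfolding R_b'_def by blast+
  show ?thesis
  proof (cases "t (n+1) \<le> b - 2")
    case True
    then have "t (n+1) * P2 \<le> (b - 2) * P2" by (rule mult_le_mono1)
    moreover have "(b - 2) * P2 + 1 * P2 = (b - 1) * P2"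
    proof -
      define a where "a = b - 2"
        have a: "b = a + 2" using b2 unfolding a_def by simp
      show ?thesis unfolding a by simp
    qed
    moreover have "b ^ n \<ge> 1" using b2 by simp
    ultimately show ?thesis unfolding Es m using bLn e2 by linarith
  next
    case False
    then have tn1: "t (n+1) = b - 1" using tR(1) by simp
    then have tn: "t n \<le> b - 1" using tR(2) by simp
    show ?thesis
    proof (cases "t n \<le> b - 2")
      case True
      then have "t n * P1 \<le> (b - 2) * P1" by (rule mult_le_mono1)
      moreover have "(b - 2) * P1 + 1 * P1 = (b - 1) * P1"
      proof -
        define a where "a = b - 2"
        have a: "b = a + 2" using b2 unfolding a_def by simp
        show ?thesis unfolding a by simp
      qed
      ultimately show ?thesis unfolding Es m tn1 using bL e1 e2 by linarith
    next
      case False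
      then have tnn: "t n = b - 1" using tn by simp
      then have "t n = b - 1 \<and> t (n+1) = b - 1" using tn1 by simp
      from mp[OF tR(3) this] have sp: "t 1 \<le> 2" "\<forall>i\<in>{1..n+1}. i \<notin> {1, n, n + 1} \<longrightarrow> t i = 0"
        by (rule conjunct1, rule conjunct2)
      have "L = t 1 * Pr b 1 + (\<Sum>i=2..n-1. t i * Pr b i)"
        unfolding L_def using n2 sum.atLeast_Suc_atMost[of 1 "n-1" "\<lambda>i. t i * Pr b i"] by (simp add: numeral_2_eq_2)
      moreover have "(\<Sum>i=2..n-1. t i * Pr b i) = 0"
      proof (intro sum.neutral ballI)
        fix i assume "i \<in> {2..n-1}"
        then have "i \<in> {1..n+1}" "i \<notin> {1,n,n+1}" using n2 by auto
        then show "t i * Pr b i = 0" using sp(2) by simp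
      qed
      ultimately have "L = t 1" by simp
      then show ?thesis unfolding Es m tn1 tnn using sp(1) e1 e2 by linarith
    qed
  qed
qed

lemma coprime_m: assumes b3: "b mod 3 \<noteq> 1" shows "coprime (sgen b n 0) (b - 1)"
proof -
  define k where "k = b - 1"
  have bk: "b = k + 1" using b2 unfolding k_def by simp
  have "b mod k = 1 mod k" unfolding bk by (simp only: mod_add_self1)
  then have "b ^ n mod k = 1 ^ n mod k" by (metis power_mod)
  then have h1: "b ^ n mod k = 1 mod k" by simp
  have "b + 1 = k + 2" using bk by simp
  then have h2: "(b + 1) mod k = 2 mod k" by (simp only: mod_add_self1)
  have "(b ^ n * (b + 1)) mod k = (1 * 2) mod k" by (rule mod_mult_cong[OF h1 h2])
  then have pf: "(b ^ n * (b + 1) + 1) mod k = (2 + 1) mod k" using mod_add_cong[of "b ^ n * (b + 1)" k 2 1 1] by simp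
  have sg: "sgen b n 0 = b ^ n * (b + 1) + 1" unfolding sgen_def by simp
  have e: "(2::nat) + 1 = 3" by simp
  have mm: "sgen b n 0 mod k = 3 mod k" using pf unfolding sg e .
  have "gcd (sgen b n 0) k = gcd k (3 mod k)" using gcd_red_nat[of "sgen b n 0" k] mm by simp
  also have "\<dots> = gcd 3 k" using gcd_red_nat[of 3 k] by (simp add: gcd.commute)
  finally have g: "gcd (sgen b n 0) k = gcd 3 k" .
  have nd: "\<not> 3 dvd k" using b3 b2 unfolding k_def by presburger
  have "gcd 3 k dvd 3" by simp
  then have "gcd 3 k \<le> 3" by (simp add: dvd_imp_le)
  moreover have "gcd 3 k \<noteq> 0" by simp
  moreover have "gcd 3 k \<noteq> 2"
  proof
    assume "gcd 3 k = 2"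
    with \<open>gcd 3 k dvd 3\<close> have "(2::nat) dvd 3" by simp
    then show False by simp
  qed
  moreover have "gcd 3 k \<noteq> 3" using nd by (metis gcd_dvd2)
  ultimately have "gcd 3 k = 1" by linarith
  then show ?thesis using g unfolding k_def by (simp add: coprime_iff_gcd_eq_1)
qed

end

context
  fixes b n :: nat
  assumes b2: "b \<ge> 2" and n2: "n \<ge> 2" and b3: "b mod 3 \<noteq> 1"
begin

lemma R_zero: "t \<in> R_b' b n \<Longrightarrow> t 0 = 0"
proof -
  assume "t \<in> R_b' b n"
  then have "\<forall>j. (j < 1 \<or> j > n + 1) \<longrightarrow> t j = 0" unfolding R_b'_def mem_Collect_eq by (rule conjunct1)
  then show "t 0 = 0" by simp
qed

lemma inj_aux:
  assumes t: "t \<in> R_b' b n" and t': "t' \<in> R_b' b n"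
    and md: "Fw n (sgen b n) t mod sgen b n 0 = Fw n (sgen b n) t' mod sgen b n 0"
    and le: "Fw n (Pr b) t' \<le> Fw n (Pr b) t"
  shows "Fw n (Pr b) t = Fw n (Pr b) t'"
proof (rule ccontr)
  assume ne: "Fw n (Pr b) t \<noteq> Fw n (Pr b) t'"
  define m where "m = sgen b n 0"
  define D where "D = Fw n (Pr b) t - Fw n (Pr b) t'"
  have Dpos: "0 < D" using ne le unfolding D_def by simp
  have Dlt: "D < m" using E_lt[OF b2 n2 t] unfolding D_def m_def Fw_Pr by simp
  have d1: "m dvd Fw n (sgen b n) t + (b - 1) * Fw n (Pr b) t" using key_rel[OF b2 n2 b3] unfolding m_def by simp
  have d2: "m dvd Fw n (sgen b n) t' + (b - 1) * Fw n (Pr b) t'" using key_rel[OF b2 n2 b3] unfolding m_def by simp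
  have "(Fw n (sgen b n) t' + (b - 1) * Fw n (Pr b) t) mod m = (Fw n (sgen b n) t + (b - 1) * Fw n (Pr b) t) mod m"
    using md unfolding m_def by (intro mod_add_cong) auto
  then have d3: "m dvd Fw n (sgen b n) t' + (b - 1) * Fw n (Pr b) t" using d1 by (simp add: dvd_eq_mod_eq_0)
  have "(b - 1) * Fw n (Pr b) t = (b - 1) * Fw n (Pr b) t' + (b - 1) * D"
  proof -
    have "Fw n (Pr b) t = Fw n (Pr b) t' + D" using le unfolding D_def by simp
    then show ?thesis by (simp only: add_mult_distrib2)
  qed
  then have "m dvd (Fw n (sgen b n) t' + (b - 1) * Fw n (Pr b) t) - (Fw n (sgen b n) t' + (b - 1) * Fw n (Pr b) t')"
    using d3 d2 by (intro dvd_diff_nat)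
  then have "m dvd (b - 1) * D" using \<open>(b - 1) * Fw n (Pr b) t = _\<close> by simp
  moreover have "coprime m (b - 1)" using coprime_m[OF b2 n2 b3] unfolding m_def .
  ultimately have "m dvd D" by (simp add: coprime_dvd_mult_right_iff)
  then show False using nat_dvd_not_less[OF Dpos Dlt] by simp
qed

lemma inj:
  assumes t: "t \<in> R_b' b n" and t': "t' \<in> R_b' b n"
    and md: "Fw n (sgen b n) t mod sgen b n 0 = Fw n (sgen b n) t' mod sgen b n 0"
  shows "Fw n (sgen b n) t = Fw n (sgen b n) t'"
proof -
  have "Fw n (Pr b) t = Fw n (Pr b) t'"
  proof (cases "Fw n (Pr b) t' \<le> Fw n (Pr b) t")
    case True then show ?thesis using inj_aux[OF t t' md] by simp
  next
    case False then show ?thesis using inj_aux[OF t' t md[symmetric]] by simp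
  qed
  then have eqE: "(\<Sum>i=1..n+1. t i * Pr b i) = (\<Sum>i=1..n+1. t' i * Pr b i)" unfolding Fw_Pr .
  have "\<forall>i. 1 \<le> i \<and> i \<le> n+1 \<longrightarrow> t i = t' i"
    by (rule digits_uniq[OF b2 R_Vd[OF t] R_Vd[OF t'] order_refl eqE])
  moreover have "t 0 = 0" "t' 0 = 0" using R_zero[OF t] R_zero[OF t'] by auto
  ultimately have "\<forall>i\<in>{0..n+1}. t i = t' i"
  proof (intro ballI)
    fix i assume i: "i \<in> {0..n+1}"
    assume A: "\<forall>i. 1 \<le> i \<and> i \<le> n+1 \<longrightarrow> t i = t' i" "t 0 = 0" "t' 0 = 0"
    show "t i = t' i"
    proof (cases "i = 0")
      case True then show ?thesis using A by simp
    next
      case False then show ?thesis using A(1) i by simp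
    qed
  qed
  then show ?thesis unfolding Fw_def by (intro sum.cong) auto
qed

end

theorem mainTheorem12:
  fixes b n :: nat
  assumes "b \<ge> 2" and "b mod 3 \<noteq> 1" and "n \<ge> 2"
  shows "Apery (T_b' b n) (sgen b n 0) =
         {(\<Sum>i = 1..n+1. t i * sgen b n i) | t. t \<in> R_b' b n}"
proof -
  note b2 = assms(1) and b3 = assms(2) and n2 = assms(3)
  define m where "m = sgen b n 0"
  have mpos: "m > 0" unfolding m_def sgen_def by simp
  have mS: "m \<in> T_b' b n" unfolding m_def T_b'_def by (rule sub_gen) simp
  have val: "(\<Sum>i = 1..n+1. t i * sgen b n i) = Fw n (sgen b n) t" if "t \<in> R_b' b n" for t
    using Fw_from1[of t n "sgen b n"] R_zero[OF b2 n2 b3 that] by simp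
  have rep: "\<exists>t\<in>R_b' b n. \<exists>k. x = Fw n (sgen b n) t + k * m" if xin: "x \<in> T_b' b n" for x
  proof -
    obtain u where u: "supp n u" "x = Fw n (sgen b n) u" using S_rep[OF b2 n2 xin] by blast
    then show ?thesis using closure[OF b2 n2 u(1)] unfolding m_def by auto
  qed
  show ?thesis
  proof (intro equalityI subsetI)
    fix x assume x: "x \<in> Apery (T_b' b n) (sgen b n 0)"
    then have xS: "x \<in> T_b' b n" and nx: "\<not> (x \<ge> m \<and> x - m \<in> T_b' b n)"
      unfolding Apery_def m_def by auto
    obtain t k where t: "t \<in> R_b' b n" "x = Fw n (sgen b n) t + k * m" using rep[OF xS] by blast
    have "k = 0"
    proof (rule ccontr)
      assume "k \<noteq> 0"
      then obtain k' where k': "k = Suc k'" by (cases k) auto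
      have "x - m = Fw n (sgen b n) t + k' * m" using t(2) k' by simp
      moreover have "Fw n (sgen b n) t + k' * m \<in> T_b' b n"
        using Fw_in_T[of n b t] sub_mult[OF mS[unfolded T_b'_def], of k'] unfolding T_b'_def
        by (rule sub_add)
      moreover have "x \<ge> m" using t(2) k' by simp
      ultimately show False using nx by simp
    qed
    then show "x \<in> {(\<Sum>i = 1..n+1. t i * sgen b n i) | t. t \<in> R_b' b n}"
    proof -
      have "x = (\<Sum>i = 1..n+1. t i * sgen b n i)" using t val[OF t(1)] \<open>k = 0\<close> by simp
      then show ?thesis using t(1) by blast
    qed
  next
    fix x assume "x \<in> {(\<Sum>i = 1..n+1. t i * sgen b n i) | t. t \<in> R_b' b n}"
    then obtain t where t: "t \<in> R_b' b n" "x = Fw n (sgen b n) t" using val by auto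
    have xS: "x \<in> T_b' b n" using t(2) Fw_in_T by simp
    have "\<not> (x \<ge> m \<and> x - m \<in> T_b' b n)"
    proof
      assume h: "x \<ge> m \<and> x - m \<in> T_b' b n"
      then obtain t' k where t': "t' \<in> R_b' b n" "x - m = Fw n (sgen b n) t' + k * m" using rep by blast
      then have "x = Fw n (sgen b n) t' + k * m + m" using h by linarith
      then have xe: "x = Fw n (sgen b n) t' + Suc k * m" by simp
      have "x mod m = Fw n (sgen b n) t' mod m" unfolding xe by (rule mod_mult_self1)
      then have "Fw n (sgen b n) t mod m = Fw n (sgen b n) t' mod m" using t(2) by simp
      then have "Fw n (sgen b n) t = Fw n (sgen b n) t'" using inj[OF b2 n2 b3 t(1) t'(1)] unfolding m_def by simp
      then show False using xe t(2) mpos by simp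
    qed
    then show "x \<in> Apery (T_b' b n) (sgen b n 0)" using xS unfolding Apery_def m_def by auto
  qed
qed

end
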